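(* Let $m\ge 2$ be an integer and let $n$ be a positive integer with $m^j\le n<m^{j+1}$ for some integer $j\ge 0$. Write the base $m$ representation of $n$ as $n=\alpha_j m^j+\alpha_{j-1}m^{j-1}+\cdots+\alpha_1 m+\alpha_0$ with $\alpha_j>0$ and $0\le \alpha_i\le m-1$ for $0\le i\le j$. Then there is a one-to-one correspondence between the set $\mathcal{B}_m(n)$ of $m$-ary partitions of $n$ and the set of integer sequences \[ \mathcal{S}_m(n)=\{(\beta_j,\beta_{j-1},\ldots,\beta_1)\,:\,0\le \beta_j\le \alpha_j \text{ and } 0\le \beta_t\le \alpha_t+m\beta_{t+1}\text{ for } 1\le t\le j-1\}. \]
   Context: An $m$-ary partition of a positive integer $n$ is a partition of $n$ in which every part is a power of $m$ (i.e. $1,m,m^2,\ldots$). Equivalently, it is a sequence $(a_\ell,a_{\ell-1},\ldots,a_0)$ of integers with $a_\ell>0$, $a_i\ge 0$ for $0\le i\le \ell-1$, and $n=a_\ell m^\ell+\cdots+a_1 m+a_0$ ($a_i$ being the number of parts equal to $m^i$). $\mathcal{B}_m(n)$ denotes the set of all $m$-ary partitions of $n$. *)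

theory Defs
  imports Main
begin

text \<open>An m-ary partition of n, encoded as the list [a_0, a_1, ..., a_l] of multiplicities
  (a_i = number of parts equal to m^i), with a_l > 0 and n = sum a_i m^i.\<close>
definition mary_partitions :: "nat \<Rightarrow> nat \<Rightarrow> nat list set" where
  "mary_partitions m n =
     {as. as \<noteq> [] \<and> last as > 0 \<and> (\<Sum>i<length as. as ! i * m ^ i) = n}"

definition digit :: "nat \<Rightarrow> nat \<Rightarrow> nat \<Rightarrow> nat" where
  "digit m n i = (n div m ^ i) mod m"

text \<open>The set S_m(n) for n with m^j <= n < m^(j+1); a sequence (beta_j, ..., beta_1) is
  encoded as the list bs of length j with bs ! (t - 1) = beta_t.\<close>
definition seqs_S :: "nat \<Rightarrow> nat \<Rightarrow> nat \<Rightarrow> nat list set" where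
  "seqs_S m n j =
     {bs. length bs = j
          \<and> (1 \<le> j \<longrightarrow> bs ! (j - 1) \<le> digit m n j)
          \<and> (\<forall>t. 1 \<le> t \<and> t \<le> j - 1 \<longrightarrow> bs ! (t - 1) \<le> digit m n t + m * bs ! t)}"

end

theory Submission
  imports Defs
begin

definition padF :: "nat list \<Rightarrow> nat \<Rightarrow> nat" where
  "padF as i = (if i < length as then as ! i else 0)"
definition stripF :: "nat \<Rightarrow> (nat \<Rightarrow> nat) \<Rightarrow> nat list" where
  "stripF j a = map a [0..<Suc (Max {i. i \<le> j \<and> a i \<noteq> 0})]"
definition PF :: "nat \<Rightarrow> nat \<Rightarrow> nat \<Rightarrow> (nat \<Rightarrow> nat) set" where
  "PF m n j = {a. (\<forall>i>j. a i = 0) \<and> (\<Sum>i\<le>j. a i * m ^ i) = n}"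
definition QF :: "nat \<Rightarrow> nat \<Rightarrow> nat \<Rightarrow> (nat \<Rightarrow> nat) set" where
  "QF m n j = {b. b 0 = 0 \<and> (\<forall>t>j. b t = 0) \<and> (\<forall>t\<le>j. b t \<le> digit m n t + m * b (Suc t))}"
definition CC :: "nat \<Rightarrow> nat \<Rightarrow> (nat \<Rightarrow> nat) \<Rightarrow> nat \<Rightarrow> nat" where
  "CC m j a t = (\<Sum>i\<in>{t..j}. a i * m ^ (i - t))"
definition fwd :: "nat \<Rightarrow> nat \<Rightarrow> nat \<Rightarrow> (nat \<Rightarrow> nat) \<Rightarrow> nat \<Rightarrow> nat" where
  "fwd m n j a t = (if t \<le> j then n div m ^ t - CC m j a t else 0)"
definition bwd :: "nat \<Rightarrow> nat \<Rightarrow> nat \<Rightarrow> (nat \<Rightarrow> nat) \<Rightarrow> nat \<Rightarrow> nat" where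
  "bwd m n j b t = (if t \<le> j then digit m n t + m * b (Suc t) - b t else 0)"
definition toF :: "nat \<Rightarrow> nat list \<Rightarrow> nat \<Rightarrow> nat" where
  "toF j bs t = (if 1 \<le> t \<and> t \<le> j then bs ! (t - 1) else 0)"
definition toL :: "nat \<Rightarrow> (nat \<Rightarrow> nat) \<Rightarrow> nat list" where
  "toL j b = map (\<lambda>i. b (Suc i)) [0..<j]"

lemma D_rec: "n div m ^ t = digit m n t + m * (n div m ^ Suc t)"
proof -
  have "n div m ^ Suc t = (n div m ^ t) div m"
    by (simp only: power_Suc2 div_mult2_eq)
  then show ?thesis unfolding digit_def by simp
qed

lemma D_top: "(n::nat) < m ^ (j + 1) \<Longrightarrow> n div m ^ Suc j = 0"
  using div_less[of n "m ^ Suc j"] by simp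

lemma CC_top: "CC m j a (Suc j) = 0"
  unfolding CC_def by simp

lemma CC_rec: assumes "t \<le> j" shows "CC m j a t = a t + m * CC m j a (Suc t)"
proof -
  have e: "{t..j} = insert t {Suc t..j}" using assms by auto
  have "m * CC m j a (Suc t) = (\<Sum>i\<in>{Suc t..j}. a i * m ^ (i - t))"
    unfolding CC_def sum_distrib_left
  proof (rule sum.cong)
    fix i assume "i \<in> {Suc t..j}"
    then have "i - t = Suc (i - Suc t)" by auto
    then show "m * (a i * m ^ (i - Suc t)) = a i * m ^ (i - t)" by simp
  qed simp
  then show ?thesis unfolding CC_def e by simp
qed

lemma CC_mul: "CC m j a t * m ^ t = (\<Sum>i\<in>{t..j}. a i * m ^ i)"
  unfolding CC_def sum_distrib_right
proof (rule sum.cong)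
  fix i assume "i \<in> {t..j}"
  then have "m ^ i = m ^ (i - t) * m ^ t" by (simp add: power_add[symmetric])
  then show "a i * m ^ (i - t) * m ^ t = a i * m ^ i" by simp
qed simp

lemma CC_0: "CC m j a 0 = (\<Sum>i\<le>j. a i * m ^ i)"
  unfolding CC_def by (simp add: atLeast0AtMost)

lemma CC_le: assumes "a \<in> PF m n j" "m \<ge> 1"
  shows "CC m j a t \<le> n div m ^ t"
proof -
  have "CC m j a t * m ^ t \<le> n"
    unfolding CC_mul using assms(1) unfolding PF_def
    by (auto intro!: sum_mono2)
  then show ?thesis using assms(2) by (simp add: less_eq_div_iff_mult_less_eq)
qed

lemma rel: assumes "a \<in> PF m n j" "m \<ge> 1" "t \<le> j"
  shows "(n div m ^ t - CC m j a t) + a t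
     = digit m n t + m * (n div m ^ Suc t - CC m j a (Suc t))"
proof -
  have le: "CC m j a (Suc t) \<le> n div m ^ Suc t" using CC_le assms by blast
  then obtain k where k: "n div m ^ Suc t = CC m j a (Suc t) + k" using le_Suc_ex le_iff_add by blast
  have d: "n div m ^ t = digit m n t + m * CC m j a (Suc t) + m * k"
    using D_rec[of n m t] k by (simp add: algebra_simps)
  have c: "CC m j a t = a t + m * CC m j a (Suc t)" using CC_rec assms(3) by blast
  have "CC m j a t \<le> n div m ^ t" using CC_le assms by blast
  then show ?thesis using d c k by simp
qed

lemma fwd_eq: assumes "a \<in> PF m n j" "m \<ge> 1" "n < m ^ (j+1)" "t \<le> Suc j"
  shows "fwd m n j a t = n div m ^ t - CC m j a t"
  using assms by (auto simp: fwd_def CC_top le_Suc_eq)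

lemma fwd_in: assumes "a \<in> PF m n j" "m \<ge> 1" "n < m ^ (j+1)"
  shows "fwd m n j a \<in> QF m n j"
  unfolding QF_def
proof (intro CollectI conjI allI impI)
  show "fwd m n j a 0 = 0" using assms(1) by (simp add: fwd_def CC_0 PF_def)
  fix t
  { assume "t > j" then show "fwd m n j a t = 0" by (simp add: fwd_def) }
  { assume "t \<le> j"
    then show "fwd m n j a t \<le> digit m n t + m * fwd m n j a (Suc t)"
      using rel[OF assms(1,2), of t] fwd_eq[OF assms, of t] fwd_eq[OF assms, of "Suc t"]
      by simp }
qed

lemma bwd_fwd: assumes "a \<in> PF m n j" "m \<ge> 1" "n < m ^ (j+1)"
  shows "bwd m n j (fwd m n j a) = a"
proof
  fix t
  show "bwd m n j (fwd m n j a) t = a t"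
  proof (cases "t \<le> j")
    case True
    then show ?thesis
      using rel[OF assms(1,2), of t] fwd_eq[OF assms, of t] fwd_eq[OF assms, of "Suc t"]
      by (simp add: bwd_def)
  next
    case False
    then show ?thesis using assms(1) by (simp add: bwd_def PF_def)
  qed
qed

lemma bwd_main: assumes "b \<in> QF m n j" "m \<ge> 1" "n < m ^ (j+1)"
  shows "t \<le> Suc j \<Longrightarrow> b t \<le> n div m ^ t \<and> CC m j (bwd m n j b) t = n div m ^ t - b t"
proof (induction "Suc j - t" arbitrary: t)
  case 0
  then have "t = Suc j" by simp
  then show ?case using assms by (simp add: QF_def CC_top)
next
  case (Suc k)
  then have tj: "t \<le> j" by simp
  have IH: "b (Suc t) \<le> n div m ^ Suc t \<and> CC m j (bwd m n j b) (Suc t) = n div m ^ Suc t - b (Suc t)"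
    using Suc.hyps(1)[of "Suc t"] Suc.hyps(2) tj by simp
  obtain k' where k: "n div m ^ Suc t = b (Suc t) + k'" using IH le_iff_add by blast
  have bt: "b t \<le> digit m n t + m * b (Suc t)" using assms(1) tj by (simp add: QF_def)
  have d: "n div m ^ t = digit m n t + m * b (Suc t) + m * k'"
    using D_rec[of n m t] k by (simp add: algebra_simps)
  have c: "CC m j (bwd m n j b) t = bwd m n j b t + m * CC m j (bwd m n j b) (Suc t)"
    using CC_rec tj by blast
  have "bwd m n j b t = digit m n t + m * b (Suc t) - b t" using tj by (simp add: bwd_def)
  then show ?case using c IH k d bt by (simp add: algebra_simps)
qed

lemma bwd_in: assumes "b \<in> QF m n j" "m \<ge> 1" "n < m ^ (j+1)"
  shows "bwd m n j b \<in> PF m n j"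
proof -
  have "CC m j (bwd m n j b) 0 = n - b 0" using bwd_main[OF assms, of 0] by simp
  then show ?thesis using assms(1) unfolding PF_def QF_def CC_0 by (auto simp: bwd_def)
qed

lemma fwd_bwd: assumes "b \<in> QF m n j" "m \<ge> 1" "n < m ^ (j+1)"
  shows "fwd m n j (bwd m n j b) = b"
proof
  fix t
  show "fwd m n j (bwd m n j b) t = b t"
  proof (cases "t \<le> j")
    case True
    then show ?thesis using bwd_main[OF assms, of t] by (simp add: fwd_def)
  next
    case False
    then show ?thesis using assms(1) by (simp add: fwd_def QF_def)
  qed
qed

lemma bij2: assumes "m \<ge> 1" "n < m ^ (j+1)"
  shows "bij_betw (fwd m n j) (PF m n j) (QF m n j)"
  by (rule bij_betw_byWitness[where f'="bwd m n j"])
     (use assms fwd_in bwd_in bwd_fwd fwd_bwd in auto)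

lemma bij3: "bij_betw (toL j) (QF m n j) (seqs_S m n j)"
proof (rule bij_betw_byWitness[where f'="toF j"])
  show "\<forall>a\<in>QF m n j. toF j (toL j a) = a"
  proof
    fix b assume b: "b \<in> QF m n j"
    show "toF j (toL j b) = b"
    proof
      fix t show "toF j (toL j b) t = b t"
        using b by (cases t) (auto simp: toF_def toL_def QF_def)
    qed
  qed
  show "\<forall>a'\<in>seqs_S m n j. toL j (toF j a') = a'"
    by (auto simp: seqs_S_def toL_def toF_def intro!: nth_equalityI)
  show "toL j ` QF m n j \<subseteq> seqs_S m n j"
  proof
    fix x assume "x \<in> toL j ` QF m n j"
    then obtain b where b: "b \<in> QF m n j" and x: "x = toL j b" by blast
    have A: "1 \<le> j \<longrightarrow> x ! (j - 1) \<le> digit m n j"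
      using b x by (auto simp: QF_def toL_def)
    have B: "\<forall>t. 1 \<le> t \<and> t \<le> j - 1 \<longrightarrow> x ! (t - 1) \<le> digit m n t + m * x ! t"
    proof (intro allI impI)
      fix t assume t: "1 \<le> t \<and> t \<le> j - 1"
      then have "b t \<le> digit m n t + m * b (Suc t)" using b by (auto simp: QF_def)
      then show "x ! (t - 1) \<le> digit m n t + m * x ! t" using t x by (auto simp: toL_def)
    qed
    show "x \<in> seqs_S m n j" using A B x by (simp add: seqs_S_def toL_def)
  qed
  show "toF j ` seqs_S m n j \<subseteq> QF m n j"
  proof
    fix y assume "y \<in> toF j ` seqs_S m n j"
    then obtain bs where bs: "bs \<in> seqs_S m n j" and y: "y = toF j bs" by blast
    have "\<forall>t\<le>j. y t \<le> digit m n t + m * y (Suc t)"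
    proof (intro allI impI)
      fix t assume t: "t \<le> j"
      show "y t \<le> digit m n t + m * y (Suc t)"
      proof (cases "t = 0")
        case True then show ?thesis by (simp add: y toF_def)
      next
        case False
        show ?thesis
        proof (cases "t = j")
          case True then show ?thesis using bs False by (simp add: y toF_def seqs_S_def)
        next
          case False2: False
          then have "1 \<le> t \<and> t \<le> j - 1" using t False by auto
          then show ?thesis using bs False by (auto simp: y toF_def seqs_S_def)
        qed
      qed
    qed
    then show "y \<in> QF m n j" by (auto simp: QF_def y toF_def)
  qed
qed

lemma part_len: assumes "as \<in> mary_partitions m n" "m \<ge> 2" "n < m ^ (j+1)"
  shows "length as \<le> Suc j"
proof (rule ccontr)
  assume "\<not> ?thesis"
  then have L: "length as - 1 \<ge> Suc j" by simp
  have ne: "as \<noteq> []" and lp: "last as > 0" and s: "(\<Sum>i<length as. as ! i * m ^ i) = n"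
    using assms(1) by (auto simp: mary_partitions_def)
  have "last as = as ! (length as - 1)" using ne by (simp add: last_conv_nth)
  have "m ^ Suc j \<le> m ^ (length as - 1)" by (rule power_increasing[OF L]) (use assms(2) in auto)
  also have "\<dots> \<le> as ! (length as - 1) * m ^ (length as - 1)"
    using lp \<open>last as = _\<close> by simp
  also have "\<dots> \<le> (\<Sum>i<length as. as ! i * m ^ i)"
    by (rule member_le_sum) (use ne in auto)
  finally show False using s assms(3) by simp
qed

lemma bij1: assumes "m \<ge> 2" "n > 0" "n < m ^ (j+1)"
  shows "bij_betw padF (mary_partitions m n) (PF m n j)"
proof (rule bij_betw_byWitness[where f'="stripF j"])
  show "\<forall>a\<in>mary_partitions m n. stripF j (padF a) = a"
  proof
    fix as assume as: "as \<in> mary_partitions m n"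
    have len: "length as \<le> Suc j" using part_len as assms by blast
    have ne: "as \<noteq> []" and lp: "last as > 0" using as by (auto simp: mary_partitions_def)
    have lst: "as ! (length as - 1) \<noteq> 0" using ne lp by (simp add: last_conv_nth)
    have "Max {i. i \<le> j \<and> padF as i \<noteq> 0} = length as - 1"
    proof (rule Max_eqI)
      show "finite {i. i \<le> j \<and> padF as i \<noteq> 0}" by simp
      show "length as - 1 \<in> {i. i \<le> j \<and> padF as i \<noteq> 0}"
        using len ne lst by (simp add: padF_def)
      fix y assume "y \<in> {i. i \<le> j \<and> padF as i \<noteq> 0}"
      then show "y \<le> length as - 1" by (auto simp: padF_def split: if_splits)
    qed
    then show "stripF j (padF as) = as"
      using ne by (auto simp: stripF_def padF_def intro!: nth_equalityI)
  qed
  show "\<forall>a'\<in>PF m n j. padF (stripF j a') = a'"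
  proof
    fix a assume a: "a \<in> PF m n j"
    have "\<exists>i\<le>j. a i \<noteq> 0"
    proof (rule ccontr)
      assume "\<not> ?thesis"
      then have "(\<Sum>i\<le>j. a i * m ^ i) = 0" by (intro sum.neutral) auto
      moreover have "(\<Sum>i\<le>j. a i * m ^ i) = n" using a by (simp add: PF_def)
      ultimately show False using assms(2) by simp
    qed
    then obtain i0 where i0: "i0 \<le> j" "a i0 \<noteq> 0" by blast
    define M where "M = Max {i. i \<le> j \<and> a i \<noteq> 0}"
    have fin: "finite {i. i \<le> j \<and> a i \<noteq> 0}" by simp
    have "M \<in> {i. i \<le> j \<and> a i \<noteq> 0}" unfolding M_def by (rule Max_in[OF fin]) (use i0 in blast)
    then have Mj: "M \<le> j" by simp
    have big: "\<And>i. i > M \<Longrightarrow> a i = 0"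
    proof -
      fix i assume "i > M"
      show "a i = 0"
      proof (cases "i \<le> j")
        case True
        then show ?thesis using Max_ge[OF fin, of i] \<open>i > M\<close> unfolding M_def by fastforce
      next
        case False then show ?thesis using a by (simp add: PF_def)
      qed
    qed
    show "padF (stripF j a) = a"
    proof
      fix i show "padF (stripF j a) i = a i"
        using big[of i] unfolding padF_def stripF_def M_def[symmetric]
        by (auto simp del: upt_Suc simp: nth_map_upt)
    qed
  qed
  show "padF ` mary_partitions m n \<subseteq> PF m n j"
  proof
    fix x assume "x \<in> padF ` mary_partitions m n"
    then obtain as where as: "as \<in> mary_partitions m n" and x: "x = padF as" by blast
    have len: "length as \<le> Suc j" using part_len as assms by blast
    have "(\<Sum>i\<le>j. padF as i * m ^ i) = (\<Sum>i<length as. padF as i * m ^ i)"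
      by (rule sum.mono_neutral_right) (use len in \<open>auto simp: padF_def\<close>)
    also have "\<dots> = (\<Sum>i<length as. as ! i * m ^ i)" by (simp add: padF_def)
    also have "\<dots> = n" using as by (simp add: mary_partitions_def)
    finally show "x \<in> PF m n j" using len by (auto simp: PF_def x padF_def)
  qed
  show "stripF j ` PF m n j \<subseteq> mary_partitions m n"
  proof
    fix y assume "y \<in> stripF j ` PF m n j"
    then obtain a where a: "a \<in> PF m n j" and y: "y = stripF j a" by blast
    have "\<exists>i\<le>j. a i \<noteq> 0"
    proof (rule ccontr)
      assume "\<not> ?thesis"
      then have "(\<Sum>i\<le>j. a i * m ^ i) = 0" by (intro sum.neutral) auto
      moreover have "(\<Sum>i\<le>j. a i * m ^ i) = n" using a by (simp add: PF_def)
      ultimately show False using assms(2) by simp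
    qed
    then obtain i0 where i0: "i0 \<le> j" "a i0 \<noteq> 0" by blast
    define M where "M = Max {i. i \<le> j \<and> a i \<noteq> 0}"
    have fin: "finite {i. i \<le> j \<and> a i \<noteq> 0}" by simp
    have Min: "M \<in> {i. i \<le> j \<and> a i \<noteq> 0}" unfolding M_def by (rule Max_in[OF fin]) (use i0 in blast)
    have big: "\<And>i. i > M \<Longrightarrow> a i = 0"
    proof -
      fix i assume "i > M"
      show "a i = 0"
      proof (cases "i \<le> j")
        case True
        then show ?thesis using Max_ge[OF fin, of i] \<open>i > M\<close> unfolding M_def by fastforce
      next
        case False then show ?thesis using a by (simp add: PF_def)
      qed
    qed
    have y': "y = map a [0..<Suc M]" using y by (simp add: stripF_def M_def)
    have "(\<Sum>i<length y. y ! i * m ^ i) = (\<Sum>i<Suc M. a i * m ^ i)"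
      using y' by (simp del: upt_Suc)
    also have "\<dots> = (\<Sum>i\<le>j. a i * m ^ i)"
      by (rule sum.mono_neutral_left) (use Min big in \<open>auto simp: not_less\<close>)
    also have "\<dots> = n" using a by (simp add: PF_def)
    finally show "y \<in> mary_partitions m n"
      using Min y' by (simp del: upt_Suc add: mary_partitions_def last_map)
  qed
qed

theorem theorem1p1:
  fixes m n j :: nat
  assumes "m \<ge> 2" and "n > 0" and "m ^ j \<le> n" and "n < m ^ (j + 1)"
  shows "\<exists>f. bij_betw f (mary_partitions m n) (seqs_S m n j)"
proof -
  have "bij_betw (toL j \<circ> (fwd m n j \<circ> padF)) (mary_partitions m n) (seqs_S m n j)"
    using bij1[OF assms(1,2,4)] bij2[of m n j] bij3[of j m n] assms
    by (auto intro!: bij_betw_trans)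
  then show ?thesis by blast
qed

end
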